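(* Let $S=(G,-1,q)$ be a quaternionic structure with abstract 2-Brauer group $B=B(S)$. Then: (a) $B$ is a boolean group (every element is its own inverse) whose neutral element is $0=q(1,1)$. (b) For all $\alpha\in\mathbb N_0$ and $a,b\in G$, $q(a^\alpha,b)=q(a,b)^\alpha=q(a,b^\alpha)$ (powers taken in $B$). (c) If $S$ has finite order $n$, then $\dim_{\mathbb F_2}B\le\binom n2$ if $-1=1$, and $\dim_{\mathbb F_2}B\le\binom n2+1$ if $-1\neq1$.
   Context: A quaternionic structure is a triple $S=(G,-1,q)$ where $G$ is a multiplicative group in which every element is its own inverse (viewed as $\mathbb F_2$-vector space), $-1\in G$ is a distinguished element (possibly $-1=1$), $-a:=(-1)a$, and $q:G\times G\to Q$ is a surjective map onto a set $Q$ with distinguished element $0$, such that for all $a,b,c,d\in G$: (Q1) $q(a,-a)=0$; (Q2) $q(a,b)=q(b,a)$; (Q3) $q(a,b)=q(a,c)\iff q(a,bc)=0$; (Q4) $q(a,b)=q(c,d)\iff$ there is $x\in G$ with $q(a,b)=q(a,x)=q(c,x)=q(c,d)$. The order of $S$ is $\dim_{\mathbb F_2}G$. The abstract 2-Brauer group $B(S)$ is the abelian group, with operation written $\ast$, generated by the set $Q$ subject only to the relations $q(a,b)\ast q(a,c)=q(a,bc)$ for all $a,b,c\in G$ (the linkage relations). *)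

theory Defs
  imports "HOL-Algebra.Free_Abelian_Groups" "HOL-Algebra.Coset" "HOL-Algebra.Generated_Groups"
begin

text \<open>A quaternionic structure (G, -1, q) with value set Q = image of q and distinguished
  element z (the element written 0 in Q). G is a group in which every element is its own
  inverse; m is the distinguished element -1.\<close>

definition qvals :: "('g, 'b) monoid_scheme \<Rightarrow> ('g \<Rightarrow> 'g \<Rightarrow> 'q) \<Rightarrow> 'q set" where
  "qvals G q = (\<lambda>(a, b). q a b) ` (carrier G \<times> carrier G)"

definition quaternionic_structure ::
  "('g, 'b) monoid_scheme \<Rightarrow> 'g \<Rightarrow> ('g \<Rightarrow> 'g \<Rightarrow> 'q) \<Rightarrow> 'q \<Rightarrow> bool" where
  "quaternionic_structure G m q z \<longleftrightarrow>
     group G \<and> (\<forall>x\<in>carrier G. x \<otimes>\<^bsub>G\<^esub> x = \<one>\<^bsub>G\<^esub>) \<and> m \<in> carrier G \<and> z \<in> qvals G q \<and>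
     (\<forall>a\<in>carrier G. q a (m \<otimes>\<^bsub>G\<^esub> a) = z) \<and>
     (\<forall>a\<in>carrier G. \<forall>b\<in>carrier G. q a b = q b a) \<and>
     (\<forall>a\<in>carrier G. \<forall>b\<in>carrier G. \<forall>c\<in>carrier G.
        q a b = q a c \<longleftrightarrow> q a (b \<otimes>\<^bsub>G\<^esub> c) = z) \<and>
     (\<forall>a\<in>carrier G. \<forall>b\<in>carrier G. \<forall>c\<in>carrier G. \<forall>d\<in>carrier G.
        q a b = q c d \<longleftrightarrow>
        (\<exists>x\<in>carrier G. q a b = q a x \<and> q a x = q c x \<and> q c x = q c d))"

definition linkage_rels :: "('g, 'b) monoid_scheme \<Rightarrow> ('g \<Rightarrow> 'g \<Rightarrow> 'q) \<Rightarrow> ('q \<Rightarrow>\<^sub>0 int) set" where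
  "linkage_rels G q = {frag_of (q a b) + frag_of (q a c) - frag_of (q a (b \<otimes>\<^bsub>G\<^esub> c)) | a b c.
     a \<in> carrier G \<and> b \<in> carrier G \<and> c \<in> carrier G}"

definition linkage_subgroup :: "('g, 'b) monoid_scheme \<Rightarrow> ('g \<Rightarrow> 'g \<Rightarrow> 'q) \<Rightarrow> ('q \<Rightarrow>\<^sub>0 int) set" where
  "linkage_subgroup G q = generate (free_Abelian_group (qvals G q)) (linkage_rels G q)"

definition brauer_group :: "('g, 'b) monoid_scheme \<Rightarrow> ('g \<Rightarrow> 'g \<Rightarrow> 'q) \<Rightarrow> ('q \<Rightarrow>\<^sub>0 int) set monoid" where
  "brauer_group G q = free_Abelian_group (qvals G q) Mod linkage_subgroup G q"

definition brauer_class :: "('g, 'b) monoid_scheme \<Rightarrow> ('g \<Rightarrow> 'g \<Rightarrow> 'q) \<Rightarrow> 'q \<Rightarrow> ('q \<Rightarrow>\<^sub>0 int) set" where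
  "brauer_class G q x = linkage_subgroup G q #>\<^bsub>free_Abelian_group (qvals G q)\<^esub> frag_of x"

end

theory Submission
  imports Defs
begin


lemma bool_generate_selfinv:
  assumes "comm_group B" "A \<subseteq> carrier B" "\<And>x. x \<in> A \<Longrightarrow> x \<otimes>\<^bsub>B\<^esub> x = \<one>\<^bsub>B\<^esub>"
    and "h \<in> generate B A"
  shows "h \<otimes>\<^bsub>B\<^esub> h = \<one>\<^bsub>B\<^esub>"
proof -
  interpret B: comm_group B by fact
  show ?thesis using assms(4)
  proof (induction rule: generate.induct)
    case one
    then show ?case by simp
  next
    case (incl h)
    then show ?case using assms(3) by simp
  next
    case (inv h)
    then have hc: "h \<in> carrier B" using assms(2) by blast
    have "inv\<^bsub>B\<^esub> h \<otimes>\<^bsub>B\<^esub> inv\<^bsub>B\<^esub> h = inv\<^bsub>B\<^esub> (h \<otimes>\<^bsub>B\<^esub> h)"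
      using hc by (simp add: B.inv_mult_group)
    then show ?case using assms(3)[OF inv] by simp
  next
    case (eng h1 h2)
    have c: "h1 \<in> carrier B" "h2 \<in> carrier B"
      using eng(1,2) B.generate_in_carrier assms(2) by blast+
    have "h1 \<otimes>\<^bsub>B\<^esub> h2 \<otimes>\<^bsub>B\<^esub> (h1 \<otimes>\<^bsub>B\<^esub> h2) = (h1 \<otimes>\<^bsub>B\<^esub> h1) \<otimes>\<^bsub>B\<^esub> (h2 \<otimes>\<^bsub>B\<^esub> h2)"
      using c by (simp add: B.m_ac)
    then show ?case using eng(3,4) by simp
  qed
qed

lemma bool_span_card:
  assumes B: "comm_group B" and bo: "\<forall>x\<in>carrier B. x \<otimes>\<^bsub>B\<^esub> x = \<one>\<^bsub>B\<^esub>"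
    and "finite S" "S \<subseteq> carrier B"
  shows "finite (generate B S) \<and> card (generate B S) \<le> 2 ^ card S"
  using assms(3,4)
proof (induction S rule: finite_induct)
  case empty
  interpret B: comm_group B by fact
  show ?case by (simp add: B.generate_empty)
next
  case (insert s S)
  interpret B: comm_group B by fact
  have sc: "s \<in> carrier B" and Sc: "S \<subseteq> carrier B" using insert by auto
  have gS: "generate B S \<subseteq> carrier B" using B.generate_incl[OF Sc] .
  have sub: "generate B (insert s S) \<subseteq> generate B S \<union> (\<lambda>x. s \<otimes>\<^bsub>B\<^esub> x) ` generate B S"
  proof
    fix h assume "h \<in> generate B (insert s S)"
    then show "h \<in> generate B S \<union> (\<lambda>x. s \<otimes>\<^bsub>B\<^esub> x) ` generate B S"
    proof (induction rule: generate.induct)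
      case one
      then show ?case by (simp add: generate.one)
    next
      case (incl h)
      show ?case
      proof (cases "h = s")
        case True
        then have "h = s \<otimes>\<^bsub>B\<^esub> \<one>\<^bsub>B\<^esub>" using sc by simp
        then show ?thesis by (metis UnI2 image_eqI generate.one)
      next
        case False
        then have "h \<in> S" using incl by simp
        then show ?thesis using generate.incl by (metis UnI1)
      qed
    next
      case (inv h)
      have hc: "h \<in> carrier B" using inv sc Sc by blast
      have "inv\<^bsub>B\<^esub> h = h" using bo hc B.inv_equality by blast
      show ?case
      proof (cases "h = s")
        case True
        then have "inv\<^bsub>B\<^esub> h = s \<otimes>\<^bsub>B\<^esub> \<one>\<^bsub>B\<^esub>" using sc \<open>inv\<^bsub>B\<^esub> h = h\<close> by simp
        then show ?thesis by (metis UnI2 image_eqI generate.one)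
      next
        case False
        then have "h \<in> S" using inv by simp
        then show ?thesis using generate.incl \<open>inv\<^bsub>B\<^esub> h = h\<close> by (metis UnI1)
      qed
    next
      case (eng h1 h2)
      from eng(3,4) show ?case
      proof (elim UnE imageE)
        assume "h1 \<in> generate B S" "h2 \<in> generate B S"
        then show ?thesis using generate.eng by (metis UnI1)
      next
        fix x assume x: "x \<in> generate B S" "h1 = s \<otimes>\<^bsub>B\<^esub> x" and "h2 \<in> generate B S"
        have xc: "x \<in> carrier B" "h2 \<in> carrier B" using x(1) \<open>h2 \<in> generate B S\<close> gS by auto
        have "h1 \<otimes>\<^bsub>B\<^esub> h2 = s \<otimes>\<^bsub>B\<^esub> (x \<otimes>\<^bsub>B\<^esub> h2)"
          unfolding x(2) using xc sc by (simp add: B.m_assoc)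
        then show ?thesis using generate.eng[OF x(1) \<open>h2 \<in> generate B S\<close>] by (metis UnI2 image_eqI)
      next
        fix y assume y: "y \<in> generate B S" "h2 = s \<otimes>\<^bsub>B\<^esub> y" and "h1 \<in> generate B S"
        have yc: "y \<in> carrier B" "h1 \<in> carrier B" using y(1) \<open>h1 \<in> generate B S\<close> gS by auto
        have "h1 \<otimes>\<^bsub>B\<^esub> h2 = s \<otimes>\<^bsub>B\<^esub> (h1 \<otimes>\<^bsub>B\<^esub> y)"
          unfolding y(2) using yc sc by (simp add: B.m_lcomm)
        then show ?thesis using generate.eng[OF \<open>h1 \<in> generate B S\<close> y(1)] by (metis UnI2 image_eqI)
      next
        fix x y assume x: "x \<in> generate B S" "h1 = s \<otimes>\<^bsub>B\<^esub> x"
          and y: "y \<in> generate B S" "h2 = s \<otimes>\<^bsub>B\<^esub> y"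
        have xc: "x \<in> carrier B" "y \<in> carrier B" using x y gS by auto
        have "h1 \<otimes>\<^bsub>B\<^esub> h2 = (s \<otimes>\<^bsub>B\<^esub> s) \<otimes>\<^bsub>B\<^esub> (x \<otimes>\<^bsub>B\<^esub> y)"
          unfolding x(2) y(2) using xc sc by (simp add: B.m_ac)
        also have "\<dots> = x \<otimes>\<^bsub>B\<^esub> y" using bo sc xc by simp
        finally show ?thesis using generate.eng[OF x(1) y(1)] by (metis UnI1)
      qed
    qed
  qed
  have fin: "finite (generate B S)" and cS: "card (generate B S) \<le> 2 ^ card S" using insert by auto
  have "card (generate B (insert s S)) \<le> card (generate B S \<union> (\<lambda>x. s \<otimes>\<^bsub>B\<^esub> x) ` generate B S)"
    using sub fin by (intro card_mono) auto
  also have "\<dots> \<le> card (generate B S) + card ((\<lambda>x. s \<otimes>\<^bsub>B\<^esub> x) ` generate B S)"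
    by (rule card_Un_le)
  also have "\<dots> \<le> card (generate B S) + card (generate B S)"
    using card_image_le[OF fin] by simp
  also have "\<dots> \<le> 2 ^ card (insert s S)" using cS insert(1,2) by simp
  finally have "card (generate B (insert s S)) \<le> 2 ^ card (insert s S)" .
  moreover have "finite (generate B (insert s S))" using sub fin by (meson finite_UnI finite_imageI finite_subset)
  ultimately show ?case by simp
qed

lemma gen_closed:
  assumes G: "group G" and bo: "\<forall>x\<in>carrier G. x \<otimes>\<^bsub>G\<^esub> x = \<one>\<^bsub>G\<^esub>"
    and gen: "generate G A = carrier G" and AX: "A \<subseteq> X" and AG: "A \<subseteq> carrier G"
    and one: "\<one>\<^bsub>G\<^esub> \<in> X" and mult: "\<And>x y. x \<in> X \<Longrightarrow> y \<in> X \<Longrightarrow> x \<otimes>\<^bsub>G\<^esub> y \<in> X"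
  shows "carrier G \<subseteq> X"
proof
  interpret G: group G by fact
  fix h assume "h \<in> carrier G"
  then have "h \<in> generate G A" using gen by simp
  then show "h \<in> X"
  proof (induction rule: generate.induct)
    case (inv h)
    then have "inv\<^bsub>G\<^esub> h = h" using bo AG G.inv_equality by blast
    then show ?case using inv AX by auto
  qed (use one mult AX in auto)
qed

lemma doubling:
  assumes G: "group G" and fin: "finite (carrier G)" and A: "A \<subseteq> carrier G"
    and g: "g \<in> carrier G" "g \<notin> generate G A"
  shows "2 * card (generate G A) \<le> card (generate G (insert g A))"
proof -
  interpret G: group G by fact
  let ?K = "generate G A" and ?K' = "generate G (insert g A)"
  have KG: "?K \<subseteq> carrier G" using G.generate_incl[OF A] .
  have K'G: "?K' \<subseteq> carrier G" using G.generate_incl A g by blast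
  have KK: "?K \<subseteq> ?K'" by (rule G.mono_generate) auto
  have gK: "(\<lambda>x. g \<otimes>\<^bsub>G\<^esub> x) ` ?K \<subseteq> ?K'"
    using KK generate.eng[OF generate.incl[of g "insert g A" G]] by blast
  have inj: "inj_on (\<lambda>x. g \<otimes>\<^bsub>G\<^esub> x) ?K"
  proof (rule inj_onI)
    fix x y assume xy: "x \<in> ?K" "y \<in> ?K" and eq: "g \<otimes>\<^bsub>G\<^esub> x = g \<otimes>\<^bsub>G\<^esub> y"
    have xc: "x \<in> carrier G" "y \<in> carrier G" using xy KG by auto
    from eq have "inv\<^bsub>G\<^esub> g \<otimes>\<^bsub>G\<^esub> (g \<otimes>\<^bsub>G\<^esub> x) = inv\<^bsub>G\<^esub> g \<otimes>\<^bsub>G\<^esub> (g \<otimes>\<^bsub>G\<^esub> y)" by simp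
    then show "x = y" using xc g by (simp add: G.m_assoc[symmetric])
  qed
  have disj: "?K \<inter> (\<lambda>x. g \<otimes>\<^bsub>G\<^esub> x) ` ?K = {}"
  proof (rule ccontr)
    assume "?K \<inter> (\<lambda>x. g \<otimes>\<^bsub>G\<^esub> x) ` ?K \<noteq> {}"
    then obtain x where x: "x \<in> ?K" "g \<otimes>\<^bsub>G\<^esub> x \<in> ?K" by blast
    have xc: "x \<in> carrier G" using x KG by blast
    have "g = (g \<otimes>\<^bsub>G\<^esub> x) \<otimes>\<^bsub>G\<^esub> inv\<^bsub>G\<^esub> x" using xc g by (simp add: G.m_assoc)
    moreover have "(g \<otimes>\<^bsub>G\<^esub> x) \<otimes>\<^bsub>G\<^esub> inv\<^bsub>G\<^esub> x \<in> ?K"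
      using x G.generate_is_subgroup[OF A] by (simp add: subgroup.m_closed subgroup.m_inv_closed)
    ultimately show False using g by simp
  qed
  have finK: "finite ?K" using KG fin finite_subset by blast
  have "2 * card ?K = card ?K + card ((\<lambda>x. g \<otimes>\<^bsub>G\<^esub> x) ` ?K)"
    using card_image[OF inj] by simp
  also have "\<dots> = card (?K \<union> (\<lambda>x. g \<otimes>\<^bsub>G\<^esub> x) ` ?K)"
    using card_Un_disjoint[OF finK _ disj] finK by simp
  also have "\<dots> \<le> card ?K'"
    using KK gK K'G fin finite_subset by (intro card_mono) auto
  finally show ?thesis .
qed

lemma extend_basis:
  assumes G: "group G" and fin: "finite (carrier G)"
  shows "set L \<subseteq> carrier G \<Longrightarrow> 2 ^ length L \<le> card (generate G (set L)) \<Longrightarrow>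
    \<exists>R. set R \<subseteq> carrier G \<and> generate G (set (L @ R)) = carrier G \<and> 2 ^ length (L @ R) \<le> card (carrier G)"
proof (induction "card (carrier G) - card (generate G (set L))" arbitrary: L rule: less_induct)
  case less
  interpret G: group G by fact
  have gc: "generate G (set L) \<subseteq> carrier G" using G.generate_incl[OF less.prems(1)] .
  show ?case
  proof (cases "generate G (set L) = carrier G")
    case True
    then show ?thesis using less.prems by (intro exI[of _ "[]"]) auto
  next
    case False
    then obtain g where g: "g \<in> carrier G" "g \<notin> generate G (set L)" using gc by blast
    have d: "2 * card (generate G (set L)) \<le> card (generate G (insert g (set L)))"
      using doubling[OF G fin less.prems(1) g] .
    have sL: "set (L @ [g]) = insert g (set L)" by simp
    have c1: "card (generate G (set (L @ [g]))) \<le> card (carrier G)"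
      using sL G.generate_incl less.prems(1) g fin by (intro card_mono) auto
    have pos: "1 \<le> card (generate G (set L))"
      using less.prems(2) by (meson le_trans one_le_numeral one_le_power)
    have lt: "card (carrier G) - card (generate G (set (L @ [g]))) < card (carrier G) - card (generate G (set L))"
      using d c1 pos unfolding sL by linarith
    have p2: "2 ^ length (L @ [g]) \<le> card (generate G (set (L @ [g])))"
      using d less.prems(2) sL by simp
    have sub': "set (L @ [g]) \<subseteq> carrier G" using less.prems(1) g by simp
    from less.hyps[OF lt sub' p2] obtain R where R: "set R \<subseteq> carrier G" "generate G (set ((L @ [g]) @ R)) = carrier G"
      "2 ^ length ((L @ [g]) @ R) \<le> card (carrier G)"
      by blast
    then show ?thesis using g by (intro exI[of _ "g # R"]) simp
  qed
qed

lemma basis_exists: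
  assumes G: "group G" and fin: "finite (carrier G)" and card: "card (carrier G) = 2 ^ n"
    and m: "m \<in> carrier G"
  shows "\<exists>L. set L \<subseteq> carrier G \<and> generate G (set L) = carrier G \<and> length L \<le> n
     \<and> (m \<noteq> \<one>\<^bsub>G\<^esub> \<longrightarrow> L \<noteq> [] \<and> L ! 0 = m)"
proof -
  interpret G: group G by fact
  have len: "length L \<le> n" if "2 ^ length L \<le> card (carrier G)" for L :: "'a list"
    using that card by simp
  show ?thesis
  proof (cases "m = \<one>\<^bsub>G\<^esub>")
    case True
    have "2 ^ length ([] :: 'a list) \<le> card (generate G (set []))"
      using G.generate_empty by simp
    moreover have e: "set ([]::'a list) \<subseteq> carrier G" by simp
    ultimately obtain R where "set R \<subseteq> carrier G" "generate G (set ([] @ R)) = carrier G"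
      "2 ^ length ([] @ R) \<le> card (carrier G)" using extend_basis[OF G fin e] by blast
    then have "set R \<subseteq> carrier G" "generate G (set R) = carrier G"
      "2 ^ length R \<le> card (carrier G)" by simp_all
    then show ?thesis using True len[of R] by (intro exI[of _ R]) simp
  next
    case False
    have sub: "{\<one>\<^bsub>G\<^esub>, m} \<subseteq> generate G {m}" using generate.one[of G "{m}"] generate.incl[of m "{m}" G] by simp
    have "finite (generate G {m})" by (rule finite_subset[OF G.generate_incl fin]) (use m in simp)
    then have "card {\<one>\<^bsub>G\<^esub>, m} \<le> card (generate G {m})" by (rule card_mono[OF _ sub])
    then have "2 ^ length [m] \<le> card (generate G (set [m]))" using False by simp
    moreover have e: "set [m] \<subseteq> carrier G" using m by simp
    ultimately obtain R where "set R \<subseteq> carrier G" "generate G (set ([m] @ R)) = carrier G"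
      "2 ^ length ([m] @ R) \<le> card (carrier G)" using extend_basis[OF G fin e] by blast
    then show ?thesis using len[of "m # R"] m
      by (intro exI[of _ "m # R"]) simp
  qed
qed



locale qs =
  fixes G :: "('g, 'b) monoid_scheme" and m :: 'g and q :: "'g \<Rightarrow> 'g \<Rightarrow> 'q" and z :: 'q
  assumes S: "quaternionic_structure G m q z"
begin

abbreviation "QQ \<equiv> qvals G q"
abbreviation "FF \<equiv> free_Abelian_group QQ"
abbreviation "HH \<equiv> linkage_subgroup G q"
abbreviation "BB \<equiv> brauer_group G q"
abbreviation "cls \<equiv> brauer_class G q"

lemma grp: "group G" using S unfolding quaternionic_structure_def by blast
lemma boolG: "x \<in> carrier G \<Longrightarrow> x \<otimes>\<^bsub>G\<^esub> x = \<one>\<^bsub>G\<^esub>" using S unfolding quaternionic_structure_def by blast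
lemma m_in: "m \<in> carrier G" using S unfolding quaternionic_structure_def by blast
lemma Q1: "a \<in> carrier G \<Longrightarrow> q a (m \<otimes>\<^bsub>G\<^esub> a) = z" using S unfolding quaternionic_structure_def by blast
lemma Q2: "a \<in> carrier G \<Longrightarrow> b \<in> carrier G \<Longrightarrow> q a b = q b a" using S unfolding quaternionic_structure_def by blast
lemma Q3: "a \<in> carrier G \<Longrightarrow> b \<in> carrier G \<Longrightarrow> c \<in> carrier G \<Longrightarrow> q a b = q a c \<longleftrightarrow> q a (b \<otimes>\<^bsub>G\<^esub> c) = z"
  using S unfolding quaternionic_structure_def by blast

lemma q_in: "a \<in> carrier G \<Longrightarrow> b \<in> carrier G \<Longrightarrow> q a b \<in> QQ"
  unfolding qvals_def by force

lemma QQ_cases: "x \<in> QQ \<Longrightarrow> \<exists>a\<in>carrier G. \<exists>b\<in>carrier G. x = q a b"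
  unfolding qvals_def by force

lemma z_eq: "z = q \<one>\<^bsub>G\<^esub> \<one>\<^bsub>G\<^esub>"
proof -
  interpret G: group G by (rule grp)
  show ?thesis using Q3[of "\<one>\<^bsub>G\<^esub>" "\<one>\<^bsub>G\<^esub>" "\<one>\<^bsub>G\<^esub>"] by simp
qed

lemma rels_sub: "linkage_rels G q \<subseteq> carrier FF"
proof
  interpret G: group G by (rule grp)
  fix r assume "r \<in> linkage_rels G q"
  then obtain a b c where abc: "a \<in> carrier G" "b \<in> carrier G" "c \<in> carrier G"
    and r: "r = frag_of (q a b) + frag_of (q a c) - frag_of (q a (b \<otimes>\<^bsub>G\<^esub> c))"
    unfolding linkage_rels_def by blast
  have "Poly_Mapping.keys r \<subseteq> {q a b, q a c, q a (b \<otimes>\<^bsub>G\<^esub> c)}"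
    unfolding r using keys_diff keys_add by fastforce
  also have "\<dots> \<subseteq> QQ" using abc q_in by auto
  finally show "r \<in> carrier FF" by simp
qed

lemma H_sub: "subgroup HH FF"
  unfolding linkage_subgroup_def
  by (rule group.generate_is_subgroup[OF group_free_Abelian_group rels_sub])

lemma H_normal: "HH \<lhd> FF"
  by (rule comm_group.subgroup_imp_normal[OF abelian_free_Abelian_group H_sub])

lemma B_comm: "comm_group BB"
  unfolding brauer_group_def by (rule comm_group.abelian_FactGroup[OF abelian_free_Abelian_group H_sub])

lemma B_grp: "group BB" using B_comm comm_group.axioms(2) by blast

lemma pi_hom: "(\<lambda>f. HH #>\<^bsub>FF\<^esub> f) \<in> hom FF BB"
  unfolding brauer_group_def by (rule normal.r_coset_hom_Mod[OF H_normal])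

lemma cls_def': "cls x = HH #>\<^bsub>FF\<^esub> frag_of x"
  unfolding brauer_class_def ..

lemma cls_carrier: "x \<in> QQ \<Longrightarrow> cls x \<in> carrier BB"
  unfolding cls_def' using pi_hom by (auto simp: hom_def)

lemma one_B: "\<one>\<^bsub>BB\<^esub> = HH"
  unfolding brauer_group_def by simp

lemma link: 
  assumes abc: "a \<in> carrier G" "b \<in> carrier G" "c \<in> carrier G"
  shows "cls (q a b) \<otimes>\<^bsub>BB\<^esub> cls (q a c) = cls (q a (b \<otimes>\<^bsub>G\<^esub> c))"
proof -
  interpret G: group G by (rule grp)
  interpret B: group BB by (rule B_grp)
  let ?x = "frag_of (q a b)" and ?y = "frag_of (q a c)" and ?w = "frag_of (q a (b \<otimes>\<^bsub>G\<^esub> c))"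
  let ?pi = "\<lambda>f. HH #>\<^bsub>FF\<^esub> f"
  have r: "?x + ?y - ?w \<in> HH"
    unfolding linkage_subgroup_def linkage_rels_def
    by (rule generate.incl) (use abc in blast)
  have rc: "?x + ?y - ?w \<in> carrier FF" using r subgroup.subset[OF H_sub] by blast
  have xc: "?x \<in> carrier FF" "?y \<in> carrier FF" "?w \<in> carrier FF" using abc q_in by auto
  have "cls (q a b) \<otimes>\<^bsub>BB\<^esub> cls (q a c) = ?pi (?x \<otimes>\<^bsub>FF\<^esub> ?y)"
    unfolding cls_def' using hom_mult[OF pi_hom xc(1,2)] by simp
  also have "?x \<otimes>\<^bsub>FF\<^esub> ?y = (?x + ?y - ?w) \<otimes>\<^bsub>FF\<^esub> ?w" by simp
  also have "?pi \<dots> = ?pi (?x + ?y - ?w) \<otimes>\<^bsub>BB\<^esub> ?pi ?w"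
    using hom_mult[OF pi_hom rc xc(3)] by simp
  also have "?pi (?x + ?y - ?w) = \<one>\<^bsub>BB\<^esub>"
    unfolding one_B by (rule subgroup.rcos_const[OF H_sub group_free_Abelian_group r])
  also have "\<one>\<^bsub>BB\<^esub> \<otimes>\<^bsub>BB\<^esub> ?pi ?w = ?pi ?w"
    using B.l_one cls_carrier[of "q a (b \<otimes>\<^bsub>G\<^esub> c)"] abc q_in unfolding cls_def' by simp
  finally show ?thesis unfolding cls_def' .
qed

lemma cls_q1: "a \<in> carrier G \<Longrightarrow> cls (q a \<one>\<^bsub>G\<^esub>) = \<one>\<^bsub>BB\<^esub>"
proof -
  assume a: "a \<in> carrier G"
  interpret G: group G by (rule grp)
  interpret B: group BB by (rule B_grp)
  have c: "cls (q a \<one>\<^bsub>G\<^esub>) \<in> carrier BB" using a q_in cls_carrier by simp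
  have "cls (q a \<one>\<^bsub>G\<^esub>) \<otimes>\<^bsub>BB\<^esub> cls (q a \<one>\<^bsub>G\<^esub>) = cls (q a \<one>\<^bsub>G\<^esub>)"
    using link[OF a G.one_closed G.one_closed] by simp
  then show ?thesis using c by simp
qed

lemma cls_sq: "a \<in> carrier G \<Longrightarrow> b \<in> carrier G \<Longrightarrow> cls (q a b) \<otimes>\<^bsub>BB\<^esub> cls (q a b) = \<one>\<^bsub>BB\<^esub>"
  using link[of a b b] boolG cls_q1 by simp

lemma cls_z: "cls z = \<one>\<^bsub>BB\<^esub>"
proof -
  interpret G: group G by (rule grp)
  show ?thesis using z_eq cls_q1[OF G.one_closed] by simp
qed

lemma B_gen: "carrier BB \<subseteq> generate BB (cls ` QQ)"
proof
  interpret B: group BB by (rule B_grp)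
  fix X assume "X \<in> carrier BB"
  then obtain f where f: "f \<in> carrier FF" "X = HH #>\<^bsub>FF\<^esub> f"
    unfolding brauer_group_def carrier_FactGroup by blast
  have sg: "subgroup (generate BB (cls ` QQ)) BB"
    using B.generate_is_subgroup cls_carrier by blast
  have "HH #>\<^bsub>FF\<^esub> f \<in> generate BB (cls ` QQ)"
  proof (rule free_Abelian_group_induct[where P="\<lambda>f. HH #>\<^bsub>FF\<^esub> f \<in> generate BB (cls ` QQ)" and S=QQ])
    show "Poly_Mapping.keys f \<subseteq> QQ" using f(1) by simp
    have "HH #>\<^bsub>FF\<^esub> 0 = \<one>\<^bsub>BB\<^esub>" 
      using hom_one[OF pi_hom group_free_Abelian_group B_grp] by simp
    then show "HH #>\<^bsub>FF\<^esub> 0 \<in> generate BB (cls ` QQ)" using generate.one by metis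
  next
    fix x y assume xy: "Poly_Mapping.keys x \<subseteq> QQ" "Poly_Mapping.keys y \<subseteq> QQ"
      "HH #>\<^bsub>FF\<^esub> x \<in> generate BB (cls ` QQ)" "HH #>\<^bsub>FF\<^esub> y \<in> generate BB (cls ` QQ)"
    have xc: "x \<in> carrier FF" "y \<in> carrier FF" using xy by auto
    have gh: "group_hom FF BB (\<lambda>f. HH #>\<^bsub>FF\<^esub> f)"
      by (simp add: group_hom_def group_hom_axioms_def B_grp pi_hom)
    have my: "- y \<in> carrier FF" using xy(2) by (simp add: keys_minus)
    have "HH #>\<^bsub>FF\<^esub> (x - y) = HH #>\<^bsub>FF\<^esub> (x \<otimes>\<^bsub>FF\<^esub> - y)" by simp
    also have "\<dots> = (HH #>\<^bsub>FF\<^esub> x) \<otimes>\<^bsub>BB\<^esub> (HH #>\<^bsub>FF\<^esub> (- y))"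
      by (rule hom_mult[OF pi_hom xc(1) my])
    also have "HH #>\<^bsub>FF\<^esub> (- y) = inv\<^bsub>BB\<^esub> (HH #>\<^bsub>FF\<^esub> y)"
      using group_hom.hom_inv[OF gh xc(2)] xy(2) by simp
    finally have "HH #>\<^bsub>FF\<^esub> (x - y) = (HH #>\<^bsub>FF\<^esub> x) \<otimes>\<^bsub>BB\<^esub> inv\<^bsub>BB\<^esub> (HH #>\<^bsub>FF\<^esub> y)" .
    then show "HH #>\<^bsub>FF\<^esub> (x - y) \<in> generate BB (cls ` QQ)"
      using xy(3,4) sg by (simp add: subgroup.m_closed subgroup.m_inv_closed)
  next
    fix a assume "a \<in> QQ"
    then show "HH #>\<^bsub>FF\<^esub> frag_of a \<in> generate BB (cls ` QQ)"
      using generate.incl[of "cls a" "cls ` QQ" BB] unfolding cls_def' by blast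
  qed
  then show "X \<in> generate BB (cls ` QQ)" using f by simp
qed

lemma B_bool: "\<forall>x\<in>carrier BB. x \<otimes>\<^bsub>BB\<^esub> x = \<one>\<^bsub>BB\<^esub>"
proof
  fix x assume "x \<in> carrier BB"
  then have xg: "x \<in> generate BB (cls ` QQ)" using B_gen by blast
  show "x \<otimes>\<^bsub>BB\<^esub> x = \<one>\<^bsub>BB\<^esub>"
  proof (rule bool_generate_selfinv[OF B_comm _ _ xg])
    show "cls ` QQ \<subseteq> carrier BB" using cls_carrier by blast
  next
    fix y assume "y \<in> cls ` QQ"
    then obtain a b where "a \<in> carrier G" "b \<in> carrier G" "y = cls (q a b)" using QQ_cases by blast
    then show "y \<otimes>\<^bsub>BB\<^esub> y = \<one>\<^bsub>BB\<^esub>" using cls_sq by simp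
  qed
qed

lemma pow_right: 
  assumes a: "a \<in> carrier G" and b: "b \<in> carrier G"
  shows "cls (q a (b [^]\<^bsub>G\<^esub> (k::nat))) = cls (q a b) [^]\<^bsub>BB\<^esub> k"
proof (induction k)
  case 0
  then show ?case using cls_q1[OF a] by simp
next
  case (Suc k)
  interpret G: group G by (rule grp)
  have "cls (q a (b [^]\<^bsub>G\<^esub> Suc k)) = cls (q a (b [^]\<^bsub>G\<^esub> k \<otimes>\<^bsub>G\<^esub> b))" by simp
  also have "\<dots> = cls (q a (b [^]\<^bsub>G\<^esub> k)) \<otimes>\<^bsub>BB\<^esub> cls (q a b)"
    using link[OF a _ b] b by simp
  finally show ?case using Suc by simp
qed

lemma pow_left: 
  assumes a: "a \<in> carrier G" and b: "b \<in> carrier G"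
  shows "cls (q (a [^]\<^bsub>G\<^esub> (k::nat)) b) = cls (q a b) [^]\<^bsub>BB\<^esub> k"
proof -
  interpret G: group G by (rule grp)
  show ?thesis using pow_right[OF b a, of k] Q2 a b by simp
qed


lemma B_inv_self:
  assumes "x \<in> carrier BB" "y \<in> carrier BB" "x \<otimes>\<^bsub>BB\<^esub> y = \<one>\<^bsub>BB\<^esub>"
  shows "y = x"
proof -
  interpret B: comm_group BB by (rule B_comm)
  have "inv\<^bsub>BB\<^esub> x = y" using assms B.inv_equality B.m_comm by metis
  moreover have "inv\<^bsub>BB\<^esub> x = x" using B_bool assms(1) B.inv_equality by blast
  ultimately show ?thesis by simp
qed

lemma cls_diag:
  assumes e: "e \<in> carrier G"
  shows "cls (q e e) = cls (q e m)"
proof -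
  interpret G: group G by (rule grp)
  have "cls (q e m) \<otimes>\<^bsub>BB\<^esub> cls (q e e) = cls (q e (m \<otimes>\<^bsub>G\<^esub> e))"
    by (rule link[OF e m_in e])
  also have "\<dots> = \<one>\<^bsub>BB\<^esub>" using Q1[OF e] cls_z by simp
  finally show ?thesis using B_inv_self cls_carrier q_in e m_in by blast
qed

lemma finite_bound:
  assumes fin: "finite (carrier G)" and card: "card (carrier G) = 2 ^ n"
  shows "finite (carrier BB) \<and>
    card (carrier BB) \<le> 2 ^ ((n choose 2) + (if m = \<one>\<^bsub>G\<^esub> then 0 else 1))"
proof -
  interpret G: group G by (rule grp)
  interpret B: comm_group BB by (rule B_comm)
  have boolG': "\<forall>x\<in>carrier G. x \<otimes>\<^bsub>G\<^esub> x = \<one>\<^bsub>G\<^esub>" using boolG by blast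
  obtain L where L: "set L \<subseteq> carrier G" "generate G (set L) = carrier G" "length L \<le> n"
      "m \<noteq> \<one>\<^bsub>G\<^esub> \<longrightarrow> L \<noteq> [] \<and> L ! 0 = m"
    using basis_exists[OF grp fin card m_in] by blast
  define k where "k = length L"
  define Ps where "Ps = {P. P \<subseteq> {0..<k} \<and> card P = 2}"
  define Soff where "Soff = (\<lambda>P. cls (q (L ! Min P) (L ! Max P))) ` Ps"
  define Sx where "Sx = (if m = \<one>\<^bsub>G\<^esub> then {} else {cls (q m m)})"
  define S where "S = Soff \<union> Sx"
  have LG: "L ! i \<in> carrier G" if "i < k" for i using L(1) that nth_mem unfolding k_def by blast
  have finPs: "finite Ps" unfolding Ps_def by (rule finite_subset[of _ "Pow {0..<k}"]) auto
  have "card Ps \<le> card {P. P \<subseteq> {0..<n} \<and> card P = 2}"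
    unfolding Ps_def using L(3) unfolding k_def
    by (intro card_mono) (auto intro: finite_subset[of _ "Pow {0..<n}"])
  also have "\<dots> = n choose 2" using n_subsets[of "{0..<n}" 2] by simp
  finally have cardPs: "card Ps \<le> n choose 2" .
  have PsMM: "Min P \<in> P \<and> Max P \<in> P \<and> P \<subseteq> {0..<k}" if "P \<in> Ps" for P
  proof -
    have "finite P" "P \<noteq> {}" using that unfolding Ps_def by (auto intro: finite_subset)
    then show ?thesis using that unfolding Ps_def by auto
  qed
  have Soff_sub: "Soff \<subseteq> carrier BB"
  proof
    fix X assume "X \<in> Soff"
    then obtain P where P: "P \<in> Ps" "X = cls (q (L ! Min P) (L ! Max P))" unfolding Soff_def by blast
    have "Min P < k" "Max P < k" using PsMM[OF P(1)] by auto
    then show "X \<in> carrier BB" using P(2) cls_carrier[OF q_in[OF LG LG]] by simp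
  qed
  have Sx_sub: "Sx \<subseteq> carrier BB" unfolding Sx_def using cls_carrier q_in m_in by auto
  have Ssub: "S \<subseteq> carrier BB" unfolding S_def using Soff_sub Sx_sub by blast
  have finS: "finite S" unfolding S_def Soff_def Sx_def using finPs by simp
  have "card S \<le> card Soff + card Sx" unfolding S_def by (rule card_Un_le)
  also have "\<dots> \<le> card Ps + card Sx" unfolding Soff_def using card_image_le[OF finPs] by simp
  also have "\<dots> \<le> (n choose 2) + (if m = \<one>\<^bsub>G\<^esub> then 0 else 1)" using cardPs unfolding Sx_def by simp
  finally have cardS: "card S \<le> (n choose 2) + (if m = \<one>\<^bsub>G\<^esub> then 0 else 1)" .
  define W where "W = generate BB S"
  have Wsg: "subgroup W BB" unfolding W_def by (rule B.generate_is_subgroup[OF Ssub])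
  have off: "cls (q (L ! i) (L ! j)) \<in> W" if "i < j" "j < k" for i j
  proof -
    have P: "{i, j} \<in> Ps" unfolding Ps_def using that by auto
    have "Min {i, j} = i" "Max {i, j} = j" using that by auto
    then have "cls (q (L ! i) (L ! j)) \<in> Soff" unfolding Soff_def using P by force
    then show ?thesis unfolding W_def S_def by (blast intro: generate.incl)
  qed
  have offsym: "cls (q (L ! i) (L ! j)) \<in> W" if "i \<noteq> j" "i < k" "j < k" for i j
  proof (cases "i < j")
    case True
    then show ?thesis using off that by blast
  next
    case False
    then have "j < i" using that by simp
    then have "cls (q (L ! j) (L ! i)) \<in> W" using off that by blast
    then show ?thesis using Q2 LG that by metis
  qed
  have allL: "cls (q (L ! i) (L ! j)) \<in> W" if "i < k" "j < k" for i j
  proof (cases "i = j")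
    case False
    then show ?thesis using offsym that by blast
  next
    case True
    have e: "L ! i \<in> carrier G" using LG that by blast
    have d: "cls (q (L ! i) (L ! i)) = cls (q (L ! i) m)" by (rule cls_diag[OF e])
    show ?thesis
    proof (cases "m = \<one>\<^bsub>G\<^esub>")
      case True
      then have "cls (q (L ! i) (L ! i)) = \<one>\<^bsub>BB\<^esub>" using d cls_q1[OF e] by simp
      then show ?thesis using \<open>i = j\<close> unfolding W_def by (simp add: generate.one)
    next
      case False
      then have L0: "L ! 0 = m" "0 < k" using L(4) unfolding k_def by auto
      show ?thesis
      proof (cases "i = 0")
        case True
        then have "cls (q (L ! i) (L ! j)) \<in> Sx" using \<open>i = j\<close> L0 False unfolding Sx_def by simp
        then show ?thesis unfolding W_def S_def by (blast intro: generate.incl)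
      next
        case False
        then have "cls (q (L ! i) (L ! 0)) \<in> W" using offsym that L0 by blast
        then show ?thesis using d L0 \<open>i = j\<close> by simp
      qed
    qed
  qed
  have step2: "carrier G \<subseteq> {b \<in> carrier G. cls (q e b) \<in> W}" if e: "e \<in> set L" for e
  proof (rule gen_closed[OF grp boolG' L(2) _ L(1)])
    obtain i where i: "i < k" "e = L ! i" using e unfolding k_def by (metis in_set_conv_nth)
    show "set L \<subseteq> {b \<in> carrier G. cls (q e b) \<in> W}"
    proof
      fix b assume "b \<in> set L"
      then obtain j where j: "j < k" "b = L ! j" unfolding k_def by (metis in_set_conv_nth)
      then show "b \<in> {b \<in> carrier G. cls (q e b) \<in> W}" using allL i LG by auto
    qed
    have eG: "e \<in> carrier G" using e L(1) by blast
    show "\<one>\<^bsub>G\<^esub> \<in> {b \<in> carrier G. cls (q e b) \<in> W}"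
      using cls_q1[OF eG] subgroup.one_closed[OF Wsg] by simp
    fix x y assume "x \<in> {b \<in> carrier G. cls (q e b) \<in> W}" "y \<in> {b \<in> carrier G. cls (q e b) \<in> W}"
    then show "x \<otimes>\<^bsub>G\<^esub> y \<in> {b \<in> carrier G. cls (q e b) \<in> W}"
      using link[OF eG, of x y, symmetric] subgroup.m_closed[OF Wsg] by auto
  qed
  have step3: "carrier G \<subseteq> {a \<in> carrier G. \<forall>b\<in>carrier G. cls (q a b) \<in> W}"
  proof (rule gen_closed[OF grp boolG' L(2) _ L(1)])
    show "set L \<subseteq> {a \<in> carrier G. \<forall>b\<in>carrier G. cls (q a b) \<in> W}"
      using step2 L(1) by blast
    show "\<one>\<^bsub>G\<^esub> \<in> {a \<in> carrier G. \<forall>b\<in>carrier G. cls (q a b) \<in> W}"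
      using cls_q1 Q2 subgroup.one_closed[OF Wsg] by simp
    fix x y assume x: "x \<in> {a \<in> carrier G. \<forall>b\<in>carrier G. cls (q a b) \<in> W}"
      and y: "y \<in> {a \<in> carrier G. \<forall>b\<in>carrier G. cls (q a b) \<in> W}"
    have "cls (q (x \<otimes>\<^bsub>G\<^esub> y) b) \<in> W" if b: "b \<in> carrier G" for b
    proof -
      have "cls (q (x \<otimes>\<^bsub>G\<^esub> y) b) = cls (q b (x \<otimes>\<^bsub>G\<^esub> y))" using Q2 x y b by simp
      also have "\<dots> = cls (q b x) \<otimes>\<^bsub>BB\<^esub> cls (q b y)" using link[OF b, of x y] x y by simp
      also have "\<dots> = cls (q x b) \<otimes>\<^bsub>BB\<^esub> cls (q y b)" using Q2 x y b by simp
      finally show ?thesis using x y b subgroup.m_closed[OF Wsg] by simp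
    qed
    then show "x \<otimes>\<^bsub>G\<^esub> y \<in> {a \<in> carrier G. \<forall>b\<in>carrier G. cls (q a b) \<in> W}" using x y by simp
  qed
  have "cls ` QQ \<subseteq> W"
  proof
    fix X assume "X \<in> cls ` QQ"
    then obtain a b where "a \<in> carrier G" "b \<in> carrier G" "X = cls (q a b)" using QQ_cases by blast
    then show "X \<in> W" using step3 by blast
  qed
  then have "generate BB (cls ` QQ) \<subseteq> W" by (rule B.generate_subgroup_incl[OF _ Wsg])
  then have BW: "carrier BB \<subseteq> W" using B_gen by blast
  have fW: "finite W" and cW: "card W \<le> 2 ^ card S"
    using bool_span_card[OF B_comm B_bool finS Ssub] unfolding W_def by auto
  have "card (carrier BB) \<le> card W" by (rule card_mono[OF fW BW])
  also have "\<dots> \<le> 2 ^ card S" by (rule cW)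
  also have "\<dots> \<le> 2 ^ ((n choose 2) + (if m = \<one>\<^bsub>G\<^esub> then 0 else 1))"
    by (rule power_increasing[OF cardS]) simp
  finally show ?thesis using finite_subset[OF BW fW] by simp
qed

end


theorem lemma4:
  fixes G :: "('g, 'b) monoid_scheme" and m :: 'g and q :: "'g \<Rightarrow> 'g \<Rightarrow> 'q" and z :: 'q
  assumes S: "quaternionic_structure G m q z"
  shows "((\<forall>x\<in>carrier (brauer_group G q). x \<otimes>\<^bsub>brauer_group G q\<^esub> x = \<one>\<^bsub>brauer_group G q\<^esub>)
        \<and> z = q \<one>\<^bsub>G\<^esub> \<one>\<^bsub>G\<^esub>
        \<and> brauer_class G q z = \<one>\<^bsub>brauer_group G q\<^esub>)
    \<and> (\<forall>(\<alpha>::nat). \<forall>a\<in>carrier G. \<forall>b\<in>carrier G.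
        brauer_class G q (q (a [^]\<^bsub>G\<^esub> \<alpha>) b) = brauer_class G q (q a b) [^]\<^bsub>brauer_group G q\<^esub> \<alpha>
      \<and> brauer_class G q (q a (b [^]\<^bsub>G\<^esub> \<alpha>)) = brauer_class G q (q a b) [^]\<^bsub>brauer_group G q\<^esub> \<alpha>)
    \<and> (\<forall>n::nat. finite (carrier G) \<and> card (carrier G) = 2 ^ n \<longrightarrow>
        finite (carrier (brauer_group G q)) \<and>
        card (carrier (brauer_group G q)) \<le> 2 ^ ((n choose 2) + (if m = \<one>\<^bsub>G\<^esub> then 0 else 1)))"
proof -
  interpret qs G m q z by (rule qs.intro) (rule S)
  show ?thesis
    using B_bool z_eq cls_z pow_left pow_right finite_bound by auto
qed

end
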